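(* Let $N\ge 2$. For generic $x\in\mathbb{C}^N$ the Heisenberg bispectrum $B^H(x)$ determines the magnitude vector $(|x_0|,\dots,|x_{N-1}|)$ up to a cyclic shift and the Fourier-magnitude vector $(|\hat x[0]|,\dots,|\hat x[N-1]|)$ up to a cyclic shift: that is, if $x'\in\mathbb{C}^N$ satisfies $B^H(x')=B^H(x)$, then there exist $k_0,n_0\in\mathbb{Z}_N$ with $|x'_j|=|x_{j+k_0}|$ and $|\hat x'[k]|=|\hat x[k+n_0]|$ for all $j,k\in\mathbb{Z}_N$.
   Context: $\zeta=e^{2\pi i/N}$; indices modulo $N$. The discrete Fourier transform of $u\in\mathbb{C}^N$ is $\hat u[k]=\sum_{j=0}^{N-1}u_j\zeta^{-jk}$. For $x\in\mathbb{C}^N$ let $y=(|x_0|^2,\dots,|x_{N-1}|^2)$ and $z=(|\hat x[0]|^2,\dots,|\hat x[N-1]|^2)$, define $B^M(x)(i,j)=\hat y[i]\hat y[j]\hat y[N-i-j]$, $B^{FM}(x)(i,j)=\hat z[i]\hat z[j]\hat z[N-i-j]$ for $i,j\in\mathbb{Z}_N$, and $B^H(x)=(B^M(x),B^{FM}(x))$. "Generic" means: for all $x$ outside a fixed proper real algebraic subset of $\mathbb{C}^N\cong\mathbb{R}^{2N}$. *)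

theory Defs
  imports "HOL-Analysis.Analysis"
begin

text \<open>Vectors in C^N are represented as functions nat => complex; only the
  entries with index < N are used. Indices are taken modulo N.\<close>

text \<open>Discrete Fourier transform: dft N u k = sum_{j<N} u_j zeta^(-jk),
  zeta = exp(2 pi i / N); the frequency k is an integer (taken mod N implicitly,
  since the expression is N-periodic in k).\<close>
definition dft :: "nat \<Rightarrow> (nat \<Rightarrow> complex) \<Rightarrow> int \<Rightarrow> complex" where
  "dft N u k = (\<Sum>j<N. u j * cis (- 2 * pi * real j * real_of_int k / real N))"

definition mag_sq :: "(nat \<Rightarrow> complex) \<Rightarrow> (nat \<Rightarrow> complex)" where
  "mag_sq x = (\<lambda>j. complex_of_real ((cmod (x j))\<^sup>2))"

definition fourier_mag_sq :: "nat \<Rightarrow> (nat \<Rightarrow> complex) \<Rightarrow> (nat \<Rightarrow> complex)" where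
  "fourier_mag_sq N x = (\<lambda>k. complex_of_real ((cmod (dft N x (int k)))\<^sup>2))"

definition bispectrum :: "nat \<Rightarrow> (nat \<Rightarrow> complex) \<Rightarrow> int \<Rightarrow> int \<Rightarrow> complex" where
  "bispectrum N w i j = dft N w i * dft N w j * dft N w (int N - i - j)"

definition BM :: "nat \<Rightarrow> (nat \<Rightarrow> complex) \<Rightarrow> int \<Rightarrow> int \<Rightarrow> complex" where
  "BM N x = bispectrum N (mag_sq x)"

definition BFM :: "nat \<Rightarrow> (nat \<Rightarrow> complex) \<Rightarrow> int \<Rightarrow> int \<Rightarrow> complex" where
  "BFM N x = bispectrum N (fourier_mag_sq N x)"

definition BH :: "nat \<Rightarrow> (nat \<Rightarrow> complex) \<Rightarrow> (int \<times> int \<Rightarrow> complex) \<times> (int \<times> int \<Rightarrow> complex)" where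
  "BH N x = ((\<lambda>(i,j). if 0 \<le> i \<and> i < int N \<and> 0 \<le> j \<and> j < int N then BM N x i j else 0),
             (\<lambda>(i,j). if 0 \<le> i \<and> i < int N \<and> 0 \<le> j \<and> j < int N then BFM N x i j else 0))"

inductive real_poly_fun :: "nat \<Rightarrow> ((nat \<Rightarrow> complex) \<Rightarrow> real) \<Rightarrow> bool" for N where
  const: "real_poly_fun N (\<lambda>x. c)"
| re_coord: "j < N \<Longrightarrow> real_poly_fun N (\<lambda>x. Re (x j))"
| im_coord: "j < N \<Longrightarrow> real_poly_fun N (\<lambda>x. Im (x j))"
| add: "real_poly_fun N p \<Longrightarrow> real_poly_fun N q \<Longrightarrow> real_poly_fun N (\<lambda>x. p x + q x)"
| mult: "real_poly_fun N p \<Longrightarrow> real_poly_fun N q \<Longrightarrow> real_poly_fun N (\<lambda>x. p x * q x)"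

definition real_algebraic_set :: "nat \<Rightarrow> (nat \<Rightarrow> complex) set \<Rightarrow> bool" where
  "real_algebraic_set N Z \<longleftrightarrow>
     (\<exists>P. finite P \<and> (\<forall>p\<in>P. real_poly_fun N p) \<and> Z = {x. \<forall>p\<in>P. p x = 0})"

end

theory Submission
  imports Defs
begin


lemma cis_add_int: "cis (a + 2*pi*real_of_int m) = cis a"
proof -
  have "cis (2*pi*real_of_int m) = 1" by (rule cis_multiple_2pi) simp
  then show ?thesis by (metis cis_mult mult_1_right)
qed

lemma cis_eq_1_int: assumes "cis a = 1" shows "\<exists>n::int. a = 2*pi*real_of_int n"
proof -
  have "exp (\<i> * complex_of_real a) = 1" using assms by (simp add: cis_conv_exp)
  then obtain n where "Im (\<i> * complex_of_real a) = real_of_int (2 * n) * pi"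
    using exp_eq_1 by blast
  then have "a = 2*pi*real_of_int n" by simp
  then show ?thesis by blast
qed

lemma root_sum:
  assumes N: "N > 0"
  shows "(\<Sum>j<N. cis (2*pi*real j*real_of_int d/real N)) = (if int N dvd d then of_nat N else 0)"
proof -
  define w where "w = cis (2*pi*real_of_int d/real N)"
  have t: "cis (2*pi*real j*real_of_int d/real N) = w ^ j" for j
    unfolding w_def by (subst Complex.DeMoivre) (simp add: field_simps)
  have wN: "w ^ N = 1" unfolding w_def using N
    by (subst Complex.DeMoivre) (simp add: cis_multiple_2pi)
  show ?thesis
  proof (cases "int N dvd d")
    case True
    then obtain q where q: "d = int N * q" by blast
    have "w = cis (2*pi*real_of_int q)" unfolding w_def q using N by (simp add: field_simps)
    also have "\<dots> = 1" by (rule cis_multiple_2pi) simp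
    finally show ?thesis using True by (simp add: t)
  next
    case False
    have "w \<noteq> 1"
    proof
      assume "w = 1"
      then obtain n::int where "2*pi*real_of_int d/real N = 2*pi*real_of_int n"
        unfolding w_def using cis_eq_1_int by blast
      then have "real_of_int d = real N * real_of_int n" using N by (simp add: field_simps)
      then have "d = int N * n" by (metis of_int_eq_iff of_int_mult of_int_of_nat_eq)
      with False show False by simp
    qed
    then show ?thesis using False wN by (simp add: t sum_gp_strict)
  qed
qed



lemma dft_mod:
  assumes N: "N > 0"
  shows "dft N u k = dft N u (k mod int N)"
  unfolding dft_def
proof (rule sum.cong[OF refl])
  fix j assume "j \<in> {..<N}"
  have k: "real_of_int k = real_of_int (k mod int N) + real N * real_of_int (k div int N)"
    by (metis mult_div_mod_eq add.commute of_int_add of_int_mult of_int_of_nat_eq)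
  have eq: "- 2 * pi * real j * real_of_int k / real N =
        - 2 * pi * real j * real_of_int (k mod int N) / real N + 2*pi*real_of_int (- (int j * (k div int N)))"
    unfolding k using N by (simp add: field_simps)
  show "u j * cis (- 2 * pi * real j * real_of_int k / real N) =
         u j * cis (- 2 * pi * real j * real_of_int (k mod int N) / real N)"
    unfolding eq cis_add_int by (rule refl)
qed

lemma dft_periodic:
  assumes N: "N > 0"
  shows "dft N u (k + int N) = dft N u k"
  using dft_mod[OF N, of u "k + int N"] dft_mod[OF N, of u k] by simp

lemma dft_cong: "(\<And>j. j < N \<Longrightarrow> u j = v j) \<Longrightarrow> dft N u k = dft N v k"
  unfolding dft_def by (rule sum.cong) auto

lemma dft_neg:
  assumes "\<And>j. j < N \<Longrightarrow> Im (u j) = 0"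
  shows "dft N u (- k) = cnj (dft N u k)"
  unfolding dft_def cnj_sum
proof (rule sum.cong[OF refl])
  fix j assume "j \<in> {..<N}"
  then have "cnj (u j) = u j" using assms by (simp add: complex_eq_iff)
  then show "u j * cis (- 2 * pi * real j * real_of_int (- k) / real N) =
        cnj (u j * cis (- 2 * pi * real j * real_of_int k / real N))"
    by (simp add: cis_cnj)
qed

lemma dft_Nminus:
  assumes N: "N > 0" and "\<And>j. j < N \<Longrightarrow> Im (u j) = 0"
  shows "dft N u (int N - i - j) = cnj (dft N u (i + j))"
proof -
  have "dft N u (int N - i - j) = dft N u (- (i+j) + int N)" by (simp add: algebra_simps)
  also have "\<dots> = dft N u (- (i+j))" by (rule dft_periodic[OF N])
  also have "\<dots> = cnj (dft N u (i + j))" by (rule dft_neg) (use assms in auto)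
  finally show ?thesis .
qed

lemma root_sum':
  assumes N: "N > 0"
  shows "(\<Sum>j<N. cis (- 2*pi*real j*real_of_int k/real N)) = (if int N dvd k then of_nat N else 0)"
proof -
  have "(\<Sum>j<N. cis (- 2*pi*real j*real_of_int k/real N)) =
        (\<Sum>j<N. cis (2*pi*real j*real_of_int (-k)/real N))" by simp
  also have "\<dots> = (if int N dvd (-k) then of_nat N else 0)" by (rule root_sum[OF N])
  finally show ?thesis by simp
qed

lemma dft_spike:
  assumes N: "N > 0" and u: "\<And>j. j < N \<Longrightarrow> u j = (if j = 0 then a + b else a)"
  shows "dft N u k = a * (if int N dvd k then of_nat N else 0) + b"
proof -
  have "dft N u k = (\<Sum>j<N. a * cis (- 2*pi*real j*real_of_int k/real N) +
                       (if j = 0 then b * cis (- 2*pi*real j*real_of_int k/real N) else 0))"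
    unfolding dft_def by (rule sum.cong) (auto simp: u algebra_simps)
  also have "\<dots> = a * (\<Sum>j<N. cis (- 2*pi*real j*real_of_int k/real N)) + b"
    using N by (simp add: sum.distrib sum_distrib_left sum.delta)
  finally show ?thesis using root_sum'[OF N] by simp
qed

lemma dft_inversion:
  assumes N: "N > 0"
  shows "(\<Sum>k<N. dft N u (int k) * cis (2*pi*real m*real k/real N)) = of_nat N * u (m mod N)"
proof -
  have "(\<Sum>k<N. dft N u (int k) * cis (2*pi*real m*real k/real N)) =
        (\<Sum>k<N. \<Sum>l<N. u l * cis (2*pi*real k*real_of_int (int m - int l)/real N))"
    unfolding dft_def sum_distrib_right
  proof (intro sum.cong refl)
    fix k l
    have "cis (- 2 * pi * real l * real_of_int (int k) / real N) * cis (2 * pi * real m * real k / real N)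
        = cis (2*pi*real k*real_of_int (int m - int l)/real N)"
      unfolding cis_mult using N by (intro arg_cong[where f=cis]) (simp add: field_simps)
    then show "u l * cis (- 2 * pi * real l * real_of_int (int k) / real N) * cis (2 * pi * real m * real k / real N)
        = u l * cis (2*pi*real k*real_of_int (int m - int l)/real N)" by (simp add: mult.assoc)
  qed
  also have "\<dots> = (\<Sum>l<N. u l * (\<Sum>k<N. cis (2*pi*real k*real_of_int (int m - int l)/real N)))"
    by (subst sum.swap) (simp add: sum_distrib_left)
  also have "\<dots> = (\<Sum>l<N. u l * (if l = m mod N then of_nat N else 0))"
  proof (rule sum.cong[OF refl])
    fix l assume l: "l \<in> {..<N}"
    have "int N dvd (int m - int l) \<longleftrightarrow> int m mod int N = int l mod int N"
      by (simp add: mod_eq_dvd_iff)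
    also have "\<dots> \<longleftrightarrow> l = m mod N" using l
      by (metis lessThan_iff mod_less of_nat_eq_iff zmod_int)
    finally show "u l * (\<Sum>k<N. cis (2*pi*real k*real_of_int (int m - int l)/real N)) =
        u l * (if l = m mod N then of_nat N else 0)" unfolding root_sum[OF N] by simp
  qed
  also have "\<dots> = of_nat N * u (m mod N)"
  proof -
    have "(\<Sum>l<N. u l * (if l = m mod N then of_nat N else 0)) =
          (\<Sum>l<N. if l = m mod N then u l * of_nat N else 0)"
      by (rule sum.cong) auto
    also have "\<dots> = u (m mod N) * of_nat N" using N by (simp add: sum.delta)
    finally show ?thesis by (simp add: mult.commute)
  qed
  finally show ?thesis .
qed



lemma root_unity:
  assumes N: "N > 0" and z: "z ^ N = (1::complex)"
  shows "\<exists>s<N. z = cis (2*pi*real s/real N)"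
proof -
  have "cmod z ^ N = 1 ^ N" using z by (metis norm_one norm_power power_one)
  then have cz: "cmod z = 1" using N by (intro power_eq_imp_eq_base[of "cmod z" N 1]) auto
  have "z \<noteq> 0" using cz by auto
  then have zc: "z = cis (Arg z)" using cz by (simp add: cis_Arg sgn_div_norm)
  have "cis (real N * Arg z) = 1" using z zc by (metis Complex.DeMoivre)
  then obtain n::int where n: "real N * Arg z = 2*pi*real_of_int n" using cis_eq_1_int by blast
  define s where "s = nat (n mod int N)"
  have m0: "n mod int N \<ge> 0" "n mod int N < int N" using N by auto
  have s: "s < N" unfolding s_def using m0 by simp
  have si: "int s = n mod int N" unfolding s_def using m0 by simp
  have "n = int s + int N * (n div int N)" unfolding si by simp
  then have sn: "real_of_int n = real s + real N * real_of_int (n div int N)"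
    by (metis of_int_add of_int_mult of_int_of_nat_eq)
  have "Arg z = 2*pi*real s/real N + 2*pi*real_of_int (n div int N)"
    using n N unfolding sn by (simp add: field_simps)
  then have "z = cis (2*pi*real s/real N)" using zc by (simp add: cis_add_int)
  with s show ?thesis by blast
qed



lemma dft_zero_real:
  assumes "\<And>j. j < N \<Longrightarrow> Im (w j) = 0"
  shows "dft N w 0 = complex_of_real (\<Sum>j<N. Re (w j))"
proof -
  have "dft N w 0 = (\<Sum>j<N. w j)" unfolding dft_def by simp
  also have "\<dots> = (\<Sum>j<N. complex_of_real (Re (w j)))"
    by (rule sum.cong) (use assms in \<open>auto simp: complex_eq_iff\<close>)
  finally show ?thesis by simp
qed

lemma bispec_unique:
  assumes N: "N > 0"
    and w: "\<And>j. j < N \<Longrightarrow> Im (w j) = 0 \<and> Re (w j) \<ge> 0"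
    and w': "\<And>j. j < N \<Longrightarrow> Im (w' j) = 0 \<and> Re (w' j) \<ge> 0"
    and nz: "\<And>k. k < N \<Longrightarrow> dft N w (int k) \<noteq> 0"
    and B: "\<And>i j. 0 \<le> i \<Longrightarrow> i < int N \<Longrightarrow> 0 \<le> j \<Longrightarrow> j < int N \<Longrightarrow>
              bispectrum N w' i j = bispectrum N w i j"
  shows "\<exists>s<N. \<forall>j<N. w' j = w ((j + s) mod N)"
proof -
  define W where "W = dft N w"
  define W' where "W' = dft N w'"
  have Wm: "W k = W (k mod int N)" for k unfolding W_def by (rule dft_mod[OF N])
  have W'm: "W' k = W' (k mod int N)" for k unfolding W'_def by (rule dft_mod[OF N])
  have nzall: "W k \<noteq> 0" for k
  proof -
    have m0: "k mod int N \<ge> 0" "k mod int N < int N" using N by auto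
    then have "k mod int N = int (nat (k mod int N))" "nat (k mod int N) < N" by auto
    then show ?thesis using nz Wm[of k] unfolding W_def by metis
  qed
  have B': "W' i * W' j * cnj (W' (i+j)) = W i * W j * cnj (W (i+j))"
    if "0 \<le> i" "i < int N" "0 \<le> j" "j < int N" for i j
    using B[OF that] dft_Nminus[OF N, of w i j] dft_Nminus[OF N, of w' i j] w w'
    unfolding bispectrum_def W_def W'_def by auto
  define a where "a = (\<Sum>j<N. Re (w j))"
  define a' where "a' = (\<Sum>j<N. Re (w' j))"
  have W0: "W 0 = complex_of_real a" unfolding W_def a_def by (rule dft_zero_real) (use w in auto)
  have W'0: "W' 0 = complex_of_real a'" unfolding W'_def a'_def by (rule dft_zero_real) (use w' in auto)
  have a0: "a \<ge> 0" unfolding a_def using w by (auto intro: sum_nonneg)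
  have a'0: "a' \<ge> 0" unfolding a'_def using w' by (auto intro: sum_nonneg)
  have "complex_of_real (a' ^ 3) = complex_of_real (a ^ 3)"
    using B'[of 0 0] N by (simp add: W0 W'0 power3_eq_cube)
  then have "a' ^ 3 = a ^ 3" by (simp only: of_real_eq_iff)
  then have aa: "a' = a" using a0 a'0 by (intro power_eq_imp_eq_base[of a' 3 a]) auto
  have W'0W0: "W' 0 = W 0" using W0 W'0 aa by simp
  have anz: "a \<noteq> 0" using nzall[of 0] W0 by auto
  have cm: "cmod (W' i) = cmod (W i)" if "0 \<le> i" "i < int N" for i
  proof -
    have "W' i * cnj (W' i) * complex_of_real a = W i * cnj (W i) * complex_of_real a"
      using B'[of i 0] that N W0 W'0 aa by (simp add: algebra_simps)
    then have "W' i * cnj (W' i) = W i * cnj (W i)" using anz by simp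
    then have "complex_of_real ((cmod (W' i))\<^sup>2) = complex_of_real ((cmod (W i))\<^sup>2)"
      by (simp add: complex_norm_square[symmetric])
    then have "(cmod (W' i))\<^sup>2 = (cmod (W i))\<^sup>2" by (simp only: of_real_eq_iff)
    then show ?thesis by (simp add: power2_eq_iff_nonneg)
  qed
  have cmall: "cmod (W' k) = cmod (W k)" for k
    using cm[of "k mod int N"] N Wm[of k] W'm[of k] by simp
  define r where "r k = W' k / W k" for k
  have W'r: "W' k = r k * W k" for k unfolding r_def using nzall[of k] by simp
  have r1: "cmod (r k) = 1" for k unfolding r_def using cmall[of k] nzall[of k] by (simp add: norm_divide)
  have rm: "r k = r (k mod int N)" for k unfolding r_def using Wm[of k] W'm[of k] by simp
  have r0: "r 0 = 1" unfolding r_def using W'0W0 nzall[of 0] by simp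
  have rmul0: "r (i + j) = r i * r j" if "0 \<le> i" "i < int N" "0 \<le> j" "j < int N" for i j
  proof -
    have "(r i * r j * cnj (r (i+j))) * (W i * W j * cnj (W (i+j))) = 1 * (W i * W j * cnj (W (i+j)))"
      using B'[OF that] unfolding W'r by (simp add: algebra_simps)
    moreover have Xnz: "W i * W j * cnj (W (i+j)) \<noteq> 0"
      using nzall[of i] nzall[of j] nzall[of "i+j"] by simp
    ultimately have e: "r i * r j * cnj (r (i+j)) = 1"
      using mult_right_cancel[OF Xnz] by blast
    have "r (i+j) * cnj (r (i+j)) = 1"
      using r1[of "i+j"] by (simp add: complex_norm_square[symmetric])
    then have "r (i+j) = r (i+j) * (r i * r j * cnj (r (i+j)))" using e by simp
    also have "\<dots> = r i * r j * (r (i+j) * cnj (r (i+j)))" by (simp add: algebra_simps)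
    finally show ?thesis using \<open>r (i+j) * cnj (r (i+j)) = 1\<close> by simp
  qed
  have rmul: "r (i + j) = r i * r j" for i j
  proof -
    have "r (i + j) = r ((i mod int N + j mod int N) mod int N)"
      using rm[of "i+j"] by (simp add: mod_add_eq)
    also have "\<dots> = r (i mod int N + j mod int N)" using rm by metis
    also have "\<dots> = r (i mod int N) * r (j mod int N)" using N by (intro rmul0) auto
    finally show ?thesis using rm[of i] rm[of j] by simp
  qed
  have rpow: "r (int n) = r 1 ^ n" for n
  proof (induction n)
    case 0 then show ?case using r0 by simp
  next
    case (Suc n) then show ?case using rmul[of 1 "int n"] by simp
  qed
  have "r 1 ^ N = 1" using rpow[of N] rm[of "int N"] r0 by simp
  then obtain s where s: "s < N" "r 1 = cis (2*pi*real s/real N)" using root_unity[OF N] by blast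
  have W'k: "W' (int k) = W (int k) * cis (2*pi*real s*real k/real N)" for k
  proof -
    have "r (int k) = cis (2*pi*real s*real k/real N)"
      unfolding rpow s(2) by (subst Complex.DeMoivre) (simp add: field_simps)
    then show ?thesis using W'r by simp
  qed
  have "w' j = w ((j + s) mod N)" if j: "j < N" for j
  proof -
    have "of_nat N * w' j = of_nat N * w' (j mod N)" using j by simp
    also have "\<dots> = (\<Sum>k<N. W' (int k) * cis (2*pi*real j*real k/real N))"
      unfolding W'_def by (rule dft_inversion[OF N, symmetric])
    also have "\<dots> = (\<Sum>k<N. W (int k) * cis (2*pi*real (j+s)*real k/real N))"
    proof (rule sum.cong[OF refl])
      fix k
      have "cis (2*pi*real s*real k/real N) * cis (2*pi*real j*real k/real N) =
            cis (2*pi*real (j+s)*real k/real N)"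
        unfolding cis_mult by (rule arg_cong[where f=cis]) (simp add: add_divide_distrib algebra_simps)
      then show "W' (int k) * cis (2*pi*real j*real k/real N) = W (int k) * cis (2*pi*real (j+s)*real k/real N)"
        unfolding W'k by (simp add: mult.assoc)
    qed
    also have "\<dots> = of_nat N * w ((j + s) mod N)"
      unfolding W_def by (rule dft_inversion[OF N])
    finally show ?thesis using N by simp
  qed
  then show ?thesis using s by blast
qed



definition cpoly :: "nat \<Rightarrow> ((nat \<Rightarrow> complex) \<Rightarrow> complex) \<Rightarrow> bool" where
  "cpoly N f \<longleftrightarrow> real_poly_fun N (\<lambda>x. Re (f x)) \<and> real_poly_fun N (\<lambda>x. Im (f x))"

lemma rpf_neg: "real_poly_fun N p \<Longrightarrow> real_poly_fun N (\<lambda>x. - p x)"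
  using real_poly_fun.mult[OF real_poly_fun.const[of N "-1"]] by simp

lemma rpf_diff: "real_poly_fun N p \<Longrightarrow> real_poly_fun N q \<Longrightarrow> real_poly_fun N (\<lambda>x. p x - q x)"
  using real_poly_fun.add[of N p "\<lambda>x. - q x"] rpf_neg by simp

lemma cpoly_const: "cpoly N (\<lambda>x. c)"
  unfolding cpoly_def by (simp add: real_poly_fun.const)

lemma cpoly_coord: "j < N \<Longrightarrow> cpoly N (\<lambda>x. x j)"
  unfolding cpoly_def by (simp add: real_poly_fun.re_coord real_poly_fun.im_coord)

lemma cpoly_add: "cpoly N f \<Longrightarrow> cpoly N g \<Longrightarrow> cpoly N (\<lambda>x. f x + g x)"
  unfolding cpoly_def by (simp add: real_poly_fun.add)

lemma cpoly_mult: "cpoly N f \<Longrightarrow> cpoly N g \<Longrightarrow> cpoly N (\<lambda>x. f x * g x)"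
  unfolding cpoly_def by (simp add: real_poly_fun.add real_poly_fun.mult rpf_diff)

lemma cpoly_cnj: "cpoly N f \<Longrightarrow> cpoly N (\<lambda>x. cnj (f x))"
  unfolding cpoly_def by (simp add: rpf_neg)

lemma cpoly_sum: "finite A \<Longrightarrow> (\<And>a. a \<in> A \<Longrightarrow> cpoly N (f a)) \<Longrightarrow> cpoly N (\<lambda>x. \<Sum>a\<in>A. f a x)"
proof (induction A rule: finite_induct)
  case empty then show ?case using cpoly_const[of N 0] by simp
next
  case (insert a A) then show ?case using cpoly_add[of N "f a" "\<lambda>x. \<Sum>a\<in>A. f a x"] by simp
qed

lemma cpoly_prod: "finite A \<Longrightarrow> (\<And>a. a \<in> A \<Longrightarrow> cpoly N (f a)) \<Longrightarrow> cpoly N (\<lambda>x. \<Prod>a\<in>A. f a x)"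
proof (induction A rule: finite_induct)
  case empty then show ?case using cpoly_const[of N 1] by simp
next
  case (insert a A) then show ?case using cpoly_mult[of N "f a" "\<lambda>x. \<Prod>a\<in>A. f a x"] by simp
qed

lemma cpoly_dft: "(\<And>j. j < N \<Longrightarrow> cpoly N (\<lambda>x. g x j)) \<Longrightarrow> cpoly N (\<lambda>x. dft N (g x) k)"
  unfolding dft_def by (intro cpoly_sum cpoly_mult cpoly_const) auto

lemma cpoly_normsq: "cpoly N f \<Longrightarrow> cpoly N (\<lambda>x. complex_of_real ((cmod (f x))\<^sup>2))"
proof -
  assume "cpoly N f"
  then have "cpoly N (\<lambda>x. f x * cnj (f x))" by (intro cpoly_mult cpoly_cnj)
  then show ?thesis unfolding complex_norm_square .
qed

lemma cpoly_mag_sq: "j < N \<Longrightarrow> cpoly N (\<lambda>x. mag_sq x j)"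
  unfolding mag_sq_def by (intro cpoly_normsq cpoly_coord)

lemma cpoly_fmag_sq: "cpoly N (\<lambda>x. fourier_mag_sq N x k)"
  unfolding fourier_mag_sq_def by (intro cpoly_normsq cpoly_dft cpoly_coord)

definition FF :: "nat \<Rightarrow> (nat \<Rightarrow> complex) \<Rightarrow> complex" where
  "FF N x = (\<Prod>k<N. dft N (mag_sq x) (int k)) * (\<Prod>k<N. dft N (fourier_mag_sq N x) (int k))"

lemma cpoly_FF: "cpoly N (FF N)"
proof -
  have "cpoly N (\<lambda>x. FF N x)" unfolding FF_def
    by (intro cpoly_mult cpoly_prod cpoly_dft cpoly_mag_sq cpoly_fmag_sq) auto
  then show ?thesis by (simp add: eta_contract_eq)
qed

lemma FF_nz: "FF N x \<noteq> 0 \<longleftrightarrow> (\<forall>k<N. dft N (mag_sq x) (int k) \<noteq> 0 \<and> dft N (fourier_mag_sq N x) (int k) \<noteq> 0)"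
  unfolding FF_def by auto

definition x0 :: "nat \<Rightarrow> nat \<Rightarrow> complex" where
  "x0 N j = (if j = 0 then of_nat N else 1)"

lemma x0_nz:
  assumes N: "N \<ge> 2"
  shows "FF N (x0 N) \<noteq> 0"
proof -
  have N0: "N > 0" using N by simp
  have ms: "mag_sq (x0 N) j = (if j = 0 then 1 + complex_of_real ((real N)\<^sup>2 - 1) else 1)" for j
    unfolding mag_sq_def x0_def by simp
  have d1: "dft N (mag_sq (x0 N)) k \<noteq> 0" for k
  proof -
    have "dft N (mag_sq (x0 N)) k = 1 * (if int N dvd k then of_nat N else 0) + complex_of_real ((real N)\<^sup>2 - 1)"
      by (rule dft_spike[OF N0]) (simp add: ms)
    moreover have "(real N)\<^sup>2 - 1 > 0" using N
      by (metis less_1_mult numeral_le_real_of_nat_iff one_less_numeral_iff power2_eq_square semiring_norm(76) diff_gt_0_iff_gt order_less_le_trans one_less_numeral_iff numeral_One)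
    ultimately have "Re (dft N (mag_sq (x0 N)) k) > 0" by auto
    then show ?thesis by auto
  qed
  have dx: "dft N (x0 N) (int k) = (if k = 0 then complex_of_real (2 * real N - 1) else complex_of_real (real N - 1))"
    if k: "k < N" for k
  proof -
    have "dft N (x0 N) (int k) = 1 * (if int N dvd int k then of_nat N else 0) + complex_of_real (real N - 1)"
      by (rule dft_spike[OF N0]) (simp add: x0_def)
    moreover have "int N dvd int k \<longleftrightarrow> k = 0" using k
      by (metis dvd_0_right int_dvd_int_iff nat_dvd_not_less not_gr_zero)
    ultimately show ?thesis by auto
  qed
  define A where "A = (real N - 1)\<^sup>2"
  define Bc where "Bc = (2 * real N - 1)\<^sup>2 - (real N - 1)\<^sup>2"
  have Bpos: "Bc > 0" unfolding Bc_def using N by (simp add: power2_eq_square algebra_simps)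
  have A0: "A \<ge> 0" unfolding A_def by simp
  have fm: "fourier_mag_sq N (x0 N) j = (if j = 0 then complex_of_real A + complex_of_real Bc else complex_of_real A)"
    if "j < N" for j
  proof (cases "j = 0")
    case True
    have "cmod (complex_of_real (2 * real N - 1)) = 2 * real N - 1"
      unfolding norm_of_real using N by simp
    then show ?thesis using True that unfolding fourier_mag_sq_def dx[OF that] A_def Bc_def
      by (simp only: if_True) simp
  next
    case False
    have "cmod (complex_of_real (real N - 1)) = real N - 1"
      unfolding norm_of_real using N by simp
    then show ?thesis using False that unfolding fourier_mag_sq_def dx[OF that] A_def Bc_def
      by (simp only: if_False)
  qed
  have d2: "dft N (fourier_mag_sq N (x0 N)) k \<noteq> 0" for k
  proof -
    have "dft N (fourier_mag_sq N (x0 N)) k = complex_of_real A * (if int N dvd k then of_nat N else 0) + complex_of_real Bc"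
      by (rule dft_spike[OF N0]) (simp add: fm)
    moreover have "A * real N \<ge> 0" using A0 by simp
    ultimately have "Re (dft N (fourier_mag_sq N (x0 N)) k) > 0" using Bpos by auto
    then show ?thesis by auto
  qed
  show ?thesis using d1 d2 FF_nz by blast
qed



theorem theorem5p3:
  fixes N :: nat
  assumes "N \<ge> 2"
  shows "\<exists>Z. real_algebraic_set N Z \<and> Z \<noteq> UNIV \<and>
    (\<forall>x x'. x \<notin> Z \<longrightarrow> BH N x' = BH N x \<longrightarrow>
      (\<exists>k0 n0. k0 < N \<and> n0 < N \<and>
         (\<forall>j<N. cmod (x' j) = cmod (x ((j + k0) mod N))) \<and>
         (\<forall>k<N. cmod (dft N x' (int k)) = cmod (dft N x (int ((k + n0) mod N))))))"
proof -
  have N0: "N > 0" using assms by simp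
  define Z where "Z = {x. Re (FF N x) = 0 \<and> Im (FF N x) = 0}"
  have ZF: "x \<notin> Z \<longleftrightarrow> FF N x \<noteq> 0" for x unfolding Z_def by (auto simp: complex_eq_iff)
  have alg: "real_algebraic_set N Z"
    unfolding real_algebraic_set_def
  proof (intro exI conjI)
    show "finite {\<lambda>x. Re (FF N x), \<lambda>x. Im (FF N x)}" by simp
    show "\<forall>p\<in>{\<lambda>x. Re (FF N x), \<lambda>x. Im (FF N x)}. real_poly_fun N p"
      using cpoly_FF[of N] unfolding cpoly_def by auto
    show "Z = {x. \<forall>p\<in>{\<lambda>x. Re (FF N x), \<lambda>x. Im (FF N x)}. p x = 0}"
      unfolding Z_def by auto
  qed
  have nU: "Z \<noteq> UNIV" using x0_nz[OF assms] ZF by blast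
  have main: "\<exists>k0 n0. k0 < N \<and> n0 < N \<and>
         (\<forall>j<N. cmod (x' j) = cmod (x ((j + k0) mod N))) \<and>
         (\<forall>k<N. cmod (dft N x' (int k)) = cmod (dft N x (int ((k + n0) mod N))))"
    if xZ: "x \<notin> Z" and BHe: "BH N x' = BH N x" for x x'
  proof -
    have nz: "\<forall>k<N. dft N (mag_sq x) (int k) \<noteq> 0 \<and> dft N (fourier_mag_sq N x) (int k) \<noteq> 0"
      using xZ ZF FF_nz by blast
    have BMe: "BM N x' i j = BM N x i j" and BFMe: "BFM N x' i j = BFM N x i j"
      if "0 \<le> i" "i < int N" "0 \<le> j" "j < int N" for i j
    proof -
      have "fst (BH N x') (i, j) = fst (BH N x) (i, j)" "snd (BH N x') (i, j) = snd (BH N x) (i, j)"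
        using BHe by simp_all
      then show "BM N x' i j = BM N x i j" "BFM N x' i j = BFM N x i j"
        using that unfolding BH_def by simp_all
    qed
    obtain k0 where k0: "k0 < N" "\<forall>j<N. mag_sq x' j = mag_sq x ((j + k0) mod N)"
      using bispec_unique[OF N0, of "mag_sq x" "mag_sq x'"] nz BMe
      unfolding BM_def by (auto simp: mag_sq_def)
    obtain n0 where n0: "n0 < N" "\<forall>j<N. fourier_mag_sq N x' j = fourier_mag_sq N x ((j + n0) mod N)"
      using bispec_unique[OF N0, of "fourier_mag_sq N x" "fourier_mag_sq N x'"] nz BFMe
      unfolding BFM_def by (auto simp: fourier_mag_sq_def)
    have "cmod (x' j) = cmod (x ((j + k0) mod N))" if "j < N" for j
    proof -
      have "(cmod (x' j))\<^sup>2 = (cmod (x ((j + k0) mod N)))\<^sup>2"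
        using k0(2) that unfolding mag_sq_def by (metis Re_complex_of_real)
      then show ?thesis by (simp add: power2_eq_iff_nonneg)
    qed
    moreover have "cmod (dft N x' (int k)) = cmod (dft N x (int ((k + n0) mod N)))" if "k < N" for k
    proof -
      have "(cmod (dft N x' (int k)))\<^sup>2 = (cmod (dft N x (int ((k + n0) mod N))))\<^sup>2"
        using n0(2) that unfolding fourier_mag_sq_def by (metis Re_complex_of_real)
      then show ?thesis by (simp add: power2_eq_iff_nonneg)
    qed
    ultimately show ?thesis using k0(1) n0(1) by blast
  qed
  show ?thesis using alg nU main by blast
qed

end
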